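(* Let $G$ be a finite abelian group with identity $0$, and let $M$ and $N$ be matroids over $G$, both of rank $n$, such that $|E(M)|=|E(N)|=n+1<p(G)$. Assume that $|(-a+E(M))\cap E(N)|\neq n$ for all $a\in E(M)$, and that $E(M)$ is neither a progression nor a semi-progression. If $0\notin E(N)$, then $M$ is matched to $N$.
   Context: $p(G)$ denotes the smallest cardinality of a nonzero subgroup of $G$. For $a\in G$ and $X\subseteq G$, $-a+X=\{-a+x: x\in X\}$. A progression of length $k$ with difference $x$ and initial term $a$ is a set $\{a,a+x,\dots,a+(k-1)x\}$; a set $A$ is a semi-progression if $A\setminus\{a\}$ is a progression for some $a\in A$. A matroid over $G$ is a matroid $M$ whose finite ground set $E(M)$ is a subset of $G$; all matroids are assumed loopless. For matroids $M,N$ over $G$ with $r(M)=r(N)=n>0$ and bases $\mathcal{M}=\{a_1,\dots,a_n\}$ of $M$ and $\mathcal{N}=\{b_1,\dots,b_n\}$ of $N$, $\mathcal{M}$ is matched to $\mathcal{N}$ if there is a permutation $\pi\in S_n$ with $a_i+b_{\pi(i)}\notin E(M)$ for all $i$. $M$ is matched to $N$ if for every basis $\mathcal{M}$ of $M$ there exists a basis $\mathcal{N}$ of $N$ such that $\mathcal{M}$ is matched to $\mathcal{N}$. *)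

theory Defs
  imports Main
begin

type_synonym 'a matroid = "'a set \<times> 'a set set"

definition ground :: "'a matroid \<Rightarrow> 'a set" where
  "ground M = fst M"

definition indep :: "'a matroid \<Rightarrow> 'a set set" where
  "indep M = snd M"

definition matroid :: "'a matroid \<Rightarrow> bool" where
  "matroid M \<longleftrightarrow> finite (ground M) \<and> indep M \<subseteq> Pow (ground M)
     \<and> {} \<in> indep M
     \<and> (\<forall>X Y. X \<in> indep M \<and> Y \<subseteq> X \<longrightarrow> Y \<in> indep M)
     \<and> (\<forall>X Y. X \<in> indep M \<and> Y \<in> indep M \<and> card X < card Y
          \<longrightarrow> (\<exists>y \<in> Y - X. insert y X \<in> indep M))"

definition loopless :: "'a matroid \<Rightarrow> bool" where
  "loopless M \<longleftrightarrow> (\<forall>x \<in> ground M. {x} \<in> indep M)"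

definition basis :: "'a matroid \<Rightarrow> 'a set \<Rightarrow> bool" where
  "basis M B \<longleftrightarrow> B \<in> indep M \<and> (\<forall>X \<in> indep M. B \<subseteq> X \<longrightarrow> X = B)"

definition mrank :: "'a matroid \<Rightarrow> nat" where
  "mrank M = Max (card ` indep M)"

definition bases_matched :: "'a::plus matroid \<Rightarrow> 'a set \<Rightarrow> 'a set \<Rightarrow> bool" where
  "bases_matched M BM BN \<longleftrightarrow>
     (\<exists>f. bij_betw f BM BN \<and> (\<forall>a \<in> BM. a + f a \<notin> ground M))"

definition matched :: "'a::plus matroid \<Rightarrow> 'a matroid \<Rightarrow> bool" where
  "matched M N \<longleftrightarrow> (\<forall>BM. basis M BM \<longrightarrow> (\<exists>BN. basis N BN \<and> bases_matched M BM BN))"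

definition progression :: "'a::monoid_add set \<Rightarrow> bool" where
  "progression A \<longleftrightarrow> (\<exists>a x k. A = {((+) x ^^ i) a | i. i < k})"

definition semi_progression :: "'a::monoid_add set \<Rightarrow> bool" where
  "semi_progression A \<longleftrightarrow> (\<exists>a \<in> A. progression (A - {a}))"

definition add_subgroup :: "'a::group_add set \<Rightarrow> bool" where
  "add_subgroup H \<longleftrightarrow> 0 \<in> H \<and> (\<forall>x \<in> H. \<forall>y \<in> H. x + y \<in> H) \<and> (\<forall>x \<in> H. - x \<in> H)"

definition pG :: "'a::group_add itself \<Rightarrow> nat" where
  "pG _ = Inf {card H | H :: 'a set. add_subgroup H \<and> H \<noteq> {0}}"

end

theory Submission
  imports Defs
begin

definition sumset :: "'a::plus set \<Rightarrow> 'a set \<Rightarrow> 'a set" where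
  "sumset S T = {s + t | s t. s \<in> S \<and> t \<in> T}"

definition apr :: "'a::monoid_add \<Rightarrow> 'a \<Rightarrow> nat \<Rightarrow> 'a set" where
  "apr c d k = {((+) d ^^ i) c | i. i < k}"

lemma progression_apr: "progression A \<longleftrightarrow> (\<exists>c d k. A = apr c d k)"
  unfolding progression_def apr_def by blast

lemma it_shift:
  fixes d :: "'a::ab_group_add"
  shows "((+) d ^^ i) (c + t) = ((+) d ^^ i) c + t"
  by (induction i) (auto simp: algebra_simps)

lemma it_Suc:
  fixes d :: "'a::ab_group_add"
  shows "((+) d ^^ Suc i) c = ((+) d ^^ i) c + d"
  by (induction i) (auto simp: algebra_simps)

lemma apr_Suc: "apr c d (Suc k) = insert (((+) d ^^ k) c) (apr c d k)"
  unfolding apr_def by (auto simp: less_Suc_eq)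

lemma apr_translate:
  fixes d :: "'a::ab_group_add"
  shows "(\<lambda>x. x + t) ` apr c d k = apr (c + t) d k"
  unfolding apr_def by (auto simp: it_shift)

lemma apr_one: "apr c d 1 = {c}"
  unfolding apr_def by auto

lemma stab_pG:
  fixes X :: "'a::{ab_group_add,finite} set"
  assumes "X \<noteq> {}" "\<forall>y\<in>X. y + d \<in> X" "d \<noteq> 0"
  shows "pG TYPE('a) \<le> card X"
proof -
  define H where "H = {h. \<forall>y\<in>X. y + h \<in> X}"
  have surj: "(\<lambda>z. z + h) ` X = X" if "h \<in> H" for h
    using that unfolding H_def
    by (intro endo_inj_surj) (auto simp: inj_on_def)
  have sub: "add_subgroup H"
    unfolding add_subgroup_def
  proof (intro conjI ballI)
    show "0 \<in> H" unfolding H_def by simp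
  next
    fix x y assume "x \<in> H" "y \<in> H" then show "x + y \<in> H"
      unfolding H_def by (simp add: add.assoc[symmetric])
  next
    fix x assume x: "x \<in> H"
    have "\<forall>y\<in>X. y + - x \<in> X"
    proof
      fix y assume "y \<in> X"
      then have "y \<in> (\<lambda>z. z + x) ` X" using surj[OF x] by simp
      then obtain z where "z \<in> X" "y = z + x" by auto
      then show "y + - x \<in> X" by simp
    qed
    then show "- x \<in> H" unfolding H_def by simp
  qed
  have "d \<in> H" using assms(2) unfolding H_def by simp
  with assms(3) have ne: "H \<noteq> {0}" by auto
  have "pG TYPE('a) \<le> card H"
    unfolding pG_def
  proof (rule cInf_lower)
    show "card H \<in> {card H |H :: 'a set. add_subgroup H \<and> H \<noteq> {0}}" using sub ne by blast
  qed simp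
  also obtain x where x: "x \<in> X" using assms(1) by auto
  have "(\<lambda>h. x + h) ` H \<subseteq> X" using x unfolding H_def by (auto simp: add.commute)
  then have "card ((\<lambda>h. x + h) ` H) \<le> card X" by (intro card_mono) auto
  then have "card H \<le> card X" by (simp add: card_image inj_on_def)
  finally show ?thesis .
qed

lemma two_ne:
  fixes z :: "'a::{ab_group_add,finite}"
  assumes "z \<noteq> 0" "2 < pG TYPE('a)"
  shows "z + z \<noteq> 0"
proof
  assume h: "z + z = 0"
  have "pG TYPE('a) \<le> card {0, z}"
    by (rule stab_pG[of _ z]) (use assms h in auto)
  also have "\<dots> \<le> 2" by (simp add: card_insert_le_m1)
  finally show False using assms by simp
qed

lemma sumset_mono: "S \<subseteq> S' \<Longrightarrow> T \<subseteq> T' \<Longrightarrow> sumset S T \<subseteq> sumset S' T'"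
  unfolding sumset_def by blast

lemma sumset_single: "sumset S {t} = (\<lambda>x. x + t) ` S"
  unfolding sumset_def by auto

lemma card_le_sumset:
  fixes S :: "'a::{ab_group_add,finite} set"
  assumes "t \<in> T" shows "card S \<le> card (sumset S T)"
proof -
  have "card S = card ((\<lambda>x. x + t) ` S)" by (simp add: card_image inj_on_def)
  also have "\<dots> \<le> card (sumset S T)"
    by (rule card_mono) (use assms in \<open>auto simp: sumset_def\<close>)
  finally show ?thesis .
qed

lemma etrans:
  fixes S T :: "'a::{ab_group_add,finite} set" and e :: 'a
  defines "T' \<equiv> {t\<in>T. t + e \<in> S}" and "S' \<equiv> S \<union> (\<lambda>t. t + e) ` T"
  shows "sumset S' T' \<subseteq> sumset S T" and "card S' + card T' = card S + card T"
proof -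
  show "sumset S' T' \<subseteq> sumset S T"
  proof
    fix x assume "x \<in> sumset S' T'"
    then obtain a b where ab: "a \<in> S'" "b \<in> T'" "x = a + b" unfolding sumset_def by auto
    show "x \<in> sumset S T"
    proof (cases "a \<in> S")
      case True then show ?thesis using ab unfolding sumset_def T'_def by auto
    next
      case False
      then obtain t where t: "t \<in> T" "a = t + e" using ab unfolding S'_def by auto
      have "x = (b + e) + t" using ab t by (simp add: algebra_simps)
      moreover have "b + e \<in> S" using ab unfolding T'_def by auto
      ultimately show ?thesis using t unfolding sumset_def by blast
    qed
  qed
  have eq: "S' = S \<union> (\<lambda>t. t + e) ` (T - T')" unfolding S'_def T'_def by auto
  have disj: "S \<inter> (\<lambda>t. t + e) ` (T - T') = {}" unfolding T'_def by auto
  have "card S' = card S + card ((\<lambda>t. t + e) ` (T - T'))"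
    unfolding eq by (rule card_Un_disjoint) (use disj in auto)
  also have "card ((\<lambda>t. t + e) ` (T - T')) = card (T - T')"
    by (simp add: card_image inj_on_def)
  also have "card (T - T') = card T - card T'"
    by (rule card_Diff_subset) (auto simp: T'_def)
  finally show "card S' + card T' = card S + card T"
    using card_mono[of T T'] unfolding T'_def by fastforce
qed

lemma CD:
  fixes S T :: "'a::{ab_group_add,finite} set"
  assumes "S \<noteq> {}" "T \<noteq> {}"
  shows "min (pG TYPE('a)) (card S + card T - 1) \<le> card (sumset S T)"
  using assms
proof (induction "card T" arbitrary: S T rule: less_induct)
  case less
  show ?case
  proof (cases "card T = 1")
    case True
    then obtain t where "T = {t}" using card_1_singletonE by blast
    then show ?thesis using True by (simp add: sumset_single card_image inj_on_def)
  next
    case False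
    with less.prems have c2: "2 \<le> card T"
      by (metis One_nat_def Suc_1 Suc_leI card_gt_0_iff finite le_neq_implies_less nat_less_le)
    then obtain t1 t2 where t12: "t1 \<in> T" "t2 \<in> T" "t1 \<noteq> t2"
      by (metis card_le_Suc0_iff_eq finite not_less_eq_eq numeral_2_eq_2)
    show ?thesis
    proof (cases "\<forall>s\<in>S. \<forall>u\<in>T. \<forall>v\<in>T. s + u - v \<in> S")
      case True
      have "pG TYPE('a) \<le> card S"
        by (rule stab_pG[of _ "t1 - t2"]) (use True t12 less.prems in \<open>auto simp: algebra_simps\<close>)
      also have "\<dots> \<le> card (sumset S T)" using card_le_sumset t12 by blast
      finally show ?thesis by simp
    next
      case False
      then obtain s u v where suv: "s \<in> S" "u \<in> T" "v \<in> T" "s + u - v \<notin> S" by blast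
      define e where "e = s - v"
      define T' where "T' = {t\<in>T. t + e \<in> S}"
      define S' where "S' = S \<union> (\<lambda>t. t + e) ` T"
      have v: "v \<in> T'" using suv unfolding T'_def e_def by auto
      have u: "u \<notin> T'" using suv unfolding T'_def e_def by (auto simp: algebra_simps)
      have lt: "card T' < card T"
        by (rule psubset_card_mono) (use u suv in \<open>auto simp: T'_def\<close>)
      have "min (pG TYPE('a)) (card S' + card T' - 1) \<le> card (sumset S' T')"
        by (rule less.hyps[OF lt]) (use v less.prems in \<open>auto simp: S'_def\<close>)
      also have "\<dots> \<le> card (sumset S T)"
        by (rule card_mono) (auto simp: S'_def T'_def etrans)
      finally show ?thesis using etrans(2)[of S e T] unfolding S'_def T'_def by simp
    qed
  qed
qed

lemma chain:
  fixes S :: "'a::{ab_group_add,finite} set"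
  assumes "S \<noteq> {}" "card S < pG TYPE('a)" "d \<noteq> 0"
    "card (S \<union> (\<lambda>x. x + d) ` S) \<le> card S + 1"
  shows "\<exists>c. S = apr c d (card S)"
  using assms
proof (induction "card S" arbitrary: S rule: less_induct)
  case less
  have ex: "\<exists>w\<in>S. w + d \<notin> S"
  proof (rule ccontr)
    assume "\<not> ?thesis"
    then have "pG TYPE('a) \<le> card S" using stab_pG[of S d] less.prems by auto
    then show False using less.prems by simp
  qed
  then obtain w where w: "w \<in> S" "w + d \<notin> S" by blast
  have other: "s + d \<in> S" if "s \<in> S" "s \<noteq> w" for s
  proof (rule ccontr)
    assume ns: "s + d \<notin> S"
    have "S \<union> (\<lambda>x. x + d) ` S \<supseteq> insert (s + d) (insert (w + d) S)" using that w by auto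
    moreover have "card (insert (s + d) (insert (w + d) S)) = card S + 2"
      using ns w that by (simp add: card_insert_if)
    ultimately have "card S + 2 \<le> card (S \<union> (\<lambda>x. x + d) ` S)"
      using card_mono[of "S \<union> (\<lambda>x. x + d) ` S" "insert (s + d) (insert (w + d) S)"] by simp
    then show False using less.prems by simp
  qed
  define S0 where "S0 = S - {w}"
  show ?case
  proof (cases "S0 = {}")
    case True
    then have "S = {w}" using w unfolding S0_def by auto
    then show ?thesis using apr_one[of w d] by auto
  next
    case False
    have lt: "card S0 < card S" unfolding S0_def using w by (metis card_Diff1_less finite)
    have sub: "S0 \<union> (\<lambda>x. x + d) ` S0 \<subseteq> insert w S0"
      using other unfolding S0_def by auto
    have "card (S0 \<union> (\<lambda>x. x + d) ` S0) \<le> card (insert w S0)" by (rule card_mono[OF _ sub]) simp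
    also have "\<dots> = card S0 + 1"
    proof -
      have "0 < card S" using w by (auto simp: card_gt_0_iff)
      then show ?thesis unfolding S0_def using w by (simp add: card_insert_if)
    qed
    finally have h: "card (S0 \<union> (\<lambda>x. x + d) ` S0) \<le> card S0 + 1" .
    obtain c where c: "S0 = apr c d (card S0)"
      using less.hyps[OF lt False _ less.prems(3) h] lt less.prems(2) by auto
    define k where "k = card S0"
    have "\<exists>w'\<in>S0. w' + d \<notin> S0"
    proof (rule ccontr)
      assume "\<not> ?thesis"
      then have "pG TYPE('a) \<le> card S0" using stab_pG[of S0 d] False less.prems by auto
      then show False using less.prems lt by simp
    qed
    then obtain w' where w': "w' \<in> S0" "w' + d \<notin> S0" by blast
    then obtain i where i: "i < k" "w' = ((+) d ^^ i) c" using c unfolding apr_def k_def by auto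
    have "w' + d \<in> S" using other w' unfolding S0_def by auto
    then have ww: "w' + d = w" using w' unfolding S0_def by auto
    have "i = k - 1"
    proof (rule ccontr)
      assume "i \<noteq> k - 1"
      then have "Suc i < k" using i by simp
      then have "((+) d ^^ Suc i) c \<in> S0" using c unfolding apr_def k_def by blast
      then show False using w' i it_Suc[of i d c] by (simp add: add.commute)
    qed
    then have "Suc i = k" using i by simp
    then have wk: "w = ((+) d ^^ k) c" using ww i(2) it_Suc[of i d c] by metis
    have ck: "S0 = apr c d k" using c unfolding k_def by metis
    have "S = insert w S0" using w unfolding S0_def by auto
    then have "S = apr c d (Suc k)" using ck wk apr_Suc[of c d k] by simp
    moreover have "card S = Suc k" using lt w \<open>S = insert w S0\<close> unfolding k_def S0_def
      by (metis card_insert_disjoint finite Diff_iff singletonI)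
    ultimately show ?thesis by auto
  qed
qed

lemma apr_ext:
  fixes d :: "'a::ab_group_add"
  assumes "0 < k"
  shows "apr c d k \<union> (\<lambda>x. x + d) ` apr c d k = apr c d (Suc k)"
proof -
  have "(\<lambda>x. x + d) ` apr c d k = {((+) d ^^ (Suc i)) c | i. i < k}"
    unfolding apr_def by (auto simp: it_Suc)
  then have "apr c d k \<union> (\<lambda>x. x + d) ` apr c d k = {((+) d ^^ i) c | i. i < k} \<union> {((+) d ^^ (Suc i)) c | i. i < k}"
    unfolding apr_def by simp
  also have "\<dots> = {((+) d ^^ i) c | i. i < Suc k}"
  proof (intro equalityI subsetI)
    fix x assume "x \<in> {((+) d ^^ i) c | i. i < k} \<union> {((+) d ^^ (Suc i)) c | i. i < k}"
    then obtain i where "i < k" "x = ((+) d ^^ i) c \<or> x = ((+) d ^^ Suc i) c" by blast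
    then show "x \<in> {((+) d ^^ i) c | i. i < Suc k}"
    proof (elim disjE)
      assume "x = ((+) d ^^ i) c" then show ?thesis using \<open>i < k\<close> by auto
    next
      assume "x = ((+) d ^^ Suc i) c" then show ?thesis using \<open>i < k\<close> by blast
    qed
  next
    fix x assume "x \<in> {((+) d ^^ i) c | i. i < Suc k}"
    then obtain i where i: "i < Suc k" "x = ((+) d ^^ i) c" by auto
    show "x \<in> {((+) d ^^ i) c | i. i < k} \<union> {((+) d ^^ (Suc i)) c | i. i < k}"
    proof (cases i)
      case 0 then show ?thesis using i assms by auto
    next
      case (Suc j) then show ?thesis using i by auto
    qed
  qed
  finally show ?thesis unfolding apr_def .
qed

lemma W_base:
  fixes S T :: "'a::{ab_group_add,finite} set"
  assumes "S \<noteq> {}" "card T = 2" "card (sumset S T) \<le> card S + 1"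
    "card (sumset S T) < pG TYPE('a)"
  shows "progression (sumset S T)"
proof -
  obtain t1 t2 where T: "T = {t1, t2}" "t1 \<noteq> t2" using assms(2) by (meson card_2_iff)
  define d where "d = t2 - t1"
  have d: "d \<noteq> 0" using T unfolding d_def by simp
  have eq: "sumset S T = (\<lambda>x. x + t1) ` (S \<union> (\<lambda>x. x + d) ` S)"
  proof
    show "sumset S T \<subseteq> (\<lambda>x. x + t1) ` (S \<union> (\<lambda>x. x + d) ` S)"
    proof
      fix x assume "x \<in> sumset S T"
      then obtain s t where st: "s \<in> S" "t \<in> T" "x = s + t" unfolding sumset_def by auto
      show "x \<in> (\<lambda>x. x + t1) ` (S \<union> (\<lambda>x. x + d) ` S)"
      proof (cases "t = t1")
        case True then show ?thesis using st by auto
      next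
        case False
        then have "t = t2" using st T by auto
        then have "x = (s + d) + t1" using st unfolding d_def by (simp add: algebra_simps)
        then show ?thesis using st by auto
      qed
    qed
  next
    show "(\<lambda>x. x + t1) ` (S \<union> (\<lambda>x. x + d) ` S) \<subseteq> sumset S T"
    proof
      fix x assume "x \<in> (\<lambda>x. x + t1) ` (S \<union> (\<lambda>x. x + d) ` S)"
      then obtain s where s: "s \<in> S" "x = s + t1 \<or> x = s + d + t1" by auto
      then have "x = s + t1 \<or> x = s + t2" unfolding d_def by (auto simp: algebra_simps)
      then show "x \<in> sumset S T" using s T unfolding sumset_def by auto
    qed
  qed
  have ceq: "card (sumset S T) = card (S \<union> (\<lambda>x. x + d) ` S)"
    unfolding eq by (simp add: card_image inj_on_def)
  have "card S \<le> card (sumset S T)" using card_le_sumset[of t1 T S] T by simp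
  have "\<exists>c. S = apr c d (card S)"
  proof -
    have "card S < pG TYPE('a)" using assms(4) \<open>card S \<le> card (sumset S T)\<close> by simp
    moreover have "card (S \<union> (\<lambda>x. x + d) ` S) \<le> card S + 1" using ceq assms(3) by simp
    ultimately show ?thesis using chain[OF assms(1) _ d] by blast
  qed
  then obtain c where c: "S = apr c d (card S)" by blast
  have "S \<union> (\<lambda>x. x + d) ` S = apr c d (Suc (card S))"
    by (subst c, subst c, rule apr_ext) (use assms(1) in auto)
  then have "sumset S T = apr (c + t1) d (Suc (card S))" unfolding eq by (simp add: apr_translate)
  then show ?thesis unfolding progression_apr by blast
qed

lemma mem_tr: "((x::'a::ab_group_add) \<in> (\<lambda>z. z - s) ` S) = (x + s \<in> S)"
proof
  assume "x \<in> (\<lambda>z. z - s) ` S" then show "x + s \<in> S" by auto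
next
  assume "x + s \<in> S" then have "(x + s) - s \<in> (\<lambda>z. z - s) ` S" by blast
  then show "x \<in> (\<lambda>z. z - s) ` S" by simp
qed

lemma Zn:
  fixes X Y :: "'a::{ab_group_add,finite} set"
  assumes X0: "0 \<in> X" and Y0: "0 \<in> Y" and XY: "X \<inter> Y = {0}"
    and sum: "\<forall>x\<in>X. \<forall>y\<in>Y. x + y \<in> X \<union> Y"
    and cY: "3 \<le> card Y" and cX: "2 \<le> card X"
    and ov: "\<forall>f u v. u \<noteq> v \<longrightarrow> u \<in> X \<longrightarrow> v \<in> X \<longrightarrow> u - f \<in> Y \<longrightarrow> v - f \<in> Y \<longrightarrow> (\<forall>y\<in>Y. y + f \<in> X)"
    and pX: "card X < pG TYPE('a)" and pY: "card Y < pG TYPE('a)" and p2: "2 < pG TYPE('a)"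
  shows False
proof -
  have s3a: "\<forall>z\<in>Y. z + x \<in> X" if "x \<in> X" "x \<noteq> 0" "y \<in> Y" "y \<noteq> 0" "x + y \<in> X" for x y
    using ov[rule_format, of x "x + y" x] that Y0 by simp
  have s3b: "\<forall>z\<in>Y. z + - y \<in> X" if "x \<in> X" "x \<noteq> 0" "y \<in> Y" "y \<noteq> 0" "x + y \<in> Y" for x y
    using ov[rule_format, of 0 x "- y"] that X0 by simp
  show False
  proof (cases "\<exists>x0\<in>X - {0}. \<not> (\<forall>z\<in>Y. z + x0 \<in> X)")
    case True
    then obtain x0 where x0: "x0 \<in> X" "x0 \<noteq> 0" "\<not> (\<forall>z\<in>Y. z + x0 \<in> X)" by blast
    have B: "\<forall>z\<in>Y. z + - y \<in> X" if "y \<in> Y" "y \<noteq> 0" for y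
    proof -
      have "x0 + y \<in> X \<union> Y" using sum x0 that by blast
      moreover have "x0 + y \<notin> X" using s3a[OF x0(1,2) that] x0(3) by blast
      ultimately show ?thesis using s3b[OF x0(1,2) that] by blast
    qed
    have ii: "c + c - y \<in> Y" if "y \<in> Y" "y \<noteq> 0" "c \<in> Y" "c \<noteq> 0" "y \<noteq> c" for y c
    proof -
      define f where "f = c - y"
      have fX: "f \<in> X" using B[OF that(1,2)] that(3) unfolding f_def by (simp add: algebra_simps)
      have "c + f \<notin> X"
      proof
        assume "c + f \<in> X"
        then have "\<forall>z\<in>Y. z + f \<in> X" using ov[rule_format, of f "c + f" f] fX that Y0 by simp
        then have "y + f \<in> X" using that by blast
        then have "c \<in> X" unfolding f_def by simp
        then show False using XY that by blast
      qed
      moreover have "f + c \<in> X \<union> Y" using sum fX that by blast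
      ultimately show ?thesis unfolding f_def by (simp add: algebra_simps)
    qed
    have iii: "c + c \<notin> Y" if "c \<in> Y" "c \<noteq> 0" for c
    proof
      assume "c + c \<in> Y"
      then have "c + c + - c \<in> X" using B that by blast
      then have "c \<in> X" by simp
      then show False using XY that by blast
    qed
    have iv: "c + c - y \<in> Y - {0}" if "y \<in> Y - {0}" "c \<in> Y - {0}" for y c
    proof (cases "y = c")
      case True then show ?thesis using that by simp
    next
      case False
      have "c + c - y \<in> Y" using ii that False by blast
      moreover have "c + c - y \<noteq> 0"
      proof
        assume "c + c - y = 0" then have "y = c + c" by (simp add: algebra_simps)
        then show False using iii that by blast
      qed
      ultimately show ?thesis by simp
    qed
    have "2 < card Y" using cY by simp
    then obtain c1 c2 where c12: "c1 \<in> Y - {0}" "c2 \<in> Y - {0}" "c1 \<noteq> c2"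
    proof -
      have "1 < card (Y - {0})" using cY Y0 by simp
      then have "\<not> (\<forall>a1\<in>Y - {0}. \<forall>a2\<in>Y - {0}. a1 = a2)"
        using card_le_Suc0_iff_eq[of "Y - {0}"] by simp
      then show ?thesis using that by blast
    qed
    define d where "d = (c2 - c1) + (c2 - c1)"
    have dnz: "d \<noteq> 0" unfolding d_def using two_ne[of "c2 - c1"] c12 p2 by simp
    have "\<forall>y\<in>Y - {0}. y + d \<in> Y - {0}"
    proof
      fix y assume y: "y \<in> Y - {0}"
      have "c1 + c1 - y \<in> Y - {0}" using iv y c12 by blast
      then have "c2 + c2 - (c1 + c1 - y) \<in> Y - {0}" using iv c12 by blast
      moreover have "c2 + c2 - (c1 + c1 - y) = y + d" unfolding d_def by (simp add: algebra_simps)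
      ultimately show "y + d \<in> Y - {0}" by simp
    qed
    then have "pG TYPE('a) \<le> card (Y - {0})" using stab_pG[of "Y - {0}" d] dnz c12 by blast
    also have "\<dots> < card Y" using Y0 by (metis card_Diff1_less finite)
    finally show False using pY by simp
  next
    case False
    then have A: "sumset (X - {0}) Y \<subseteq> X" unfolding sumset_def by (auto simp: add.commute)
    have ne: "X - {0} \<noteq> {}"
    proof
      assume "X - {0} = {}" then have "X \<subseteq> {0}" by blast
      then have "card X \<le> 1" using card_mono[of "{0}" X] by simp
      then show False using cX by simp
    qed
    have "min (pG TYPE('a)) (card (X - {0}) + card Y - 1) \<le> card (sumset (X - {0}) Y)"
      by (rule CD) (use ne Y0 in auto)
    also have "\<dots> \<le> card X" by (rule card_mono[OF _ A]) simp
    finally have "card (X - {0}) + card Y - 1 \<le> card X" using pX by simp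
    moreover have "card (X - {0}) = card X - 1" using X0 by simp
    ultimately show False using cX cY by simp
  qed
qed

lemma W:
  fixes S T :: "'a::{ab_group_add,finite} set"
  assumes "2 \<le> card S" "2 \<le> card T" "card (sumset S T) + 1 \<le> card S + card T"
    "card (sumset S T) < pG TYPE('a)"
  shows "progression (sumset S T)"
  using assms
proof (induction "card T" arbitrary: S T rule: less_induct)
  case less
  have Sne: "S \<noteq> {}" and Tne: "T \<noteq> {}" using less.prems by auto
  show ?case
  proof (cases "card T = 2")
    case True
    then show ?thesis using W_base[OF Sne True] less.prems by simp
  next
    case False
    then have c3: "3 \<le> card T" using less.prems by simp
    have cd: "min (pG TYPE('a)) (card S + card T - 1) \<le> card (sumset S T)" using CD[OF Sne Tne] .
    then have sig: "card (sumset S T) = card S + card T - 1" using less.prems by simp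
    have p2: "2 < pG TYPE('a)" using sig less.prems by simp
    show ?thesis
    proof (cases "\<exists>e u v. u \<noteq> v \<and> u \<in> S \<and> v \<in> S \<and> u - e \<in> T \<and> v - e \<in> T \<and> \<not> (\<forall>t\<in>T. t + e \<in> S)")
      case True
      then obtain e u v where euv: "u \<noteq> v" "u \<in> S" "v \<in> S" "u - e \<in> T" "v - e \<in> T" "\<not> (\<forall>t\<in>T. t + e \<in> S)"
        by blast
      define T' where "T' = {t\<in>T. t + e \<in> S}"
      define S' where "S' = S \<union> (\<lambda>t. t + e) ` T"
      have sub: "sumset S' T' \<subseteq> sumset S T" and cs: "card S' + card T' = card S + card T"
        using etrans[of S e T] unfolding S'_def T'_def by auto
      have "{u - e, v - e} \<subseteq> T'" using euv unfolding T'_def by auto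
      moreover have "card {u - e, v - e} = 2" using euv by simp
      ultimately have cT': "2 \<le> card T'" by (metis card_mono finite)
      have lt: "card T' < card T"
        by (rule psubset_card_mono) (use euv in \<open>auto simp: T'_def\<close>)
      have "card S \<le> card S'" unfolding S'_def by (rule card_mono) auto
      then have cS': "2 \<le> card S'" using less.prems by simp
      have le: "card (sumset S' T') \<le> card (sumset S T)" by (rule card_mono[OF _ sub]) simp
      have ih: "progression (sumset S' T')"
      proof (rule less.hyps[OF lt cS' cT'])
        show "card (sumset S' T') + 1 \<le> card S' + card T'" using le cs sig less.prems(3) by linarith
        show "card (sumset S' T') < pG TYPE('a)" using le less.prems(4) by linarith
      qed
      have "T' \<noteq> {}" "S' \<noteq> {}" using cT' cS' by auto
      then have "min (pG TYPE('a)) (card S' + card T' - 1) \<le> card (sumset S' T')" using CD by blast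
      then have "card (sumset S T) \<le> card (sumset S' T')" using cs sig less.prems by simp
      then have "card (sumset S' T') = card (sumset S T)" using le by simp
      then have "sumset S' T' = sumset S T" by (rule card_subset_eq[OF finite sub])
      then show ?thesis using ih by simp
    next
      case False
      then have ov: "\<forall>e u v. u \<noteq> v \<longrightarrow> u \<in> S \<longrightarrow> v \<in> S \<longrightarrow> u - e \<in> T \<longrightarrow> v - e \<in> T \<longrightarrow> (\<forall>t\<in>T. t + e \<in> S)"
        by blast
      have cSle: "card S \<le> card (sumset S T)" using card_le_sumset Tne by blast
      have "\<exists>s\<in>S. \<exists>t\<in>T. \<forall>s1\<in>S. s1 - (s - t) \<in> T \<longrightarrow> s1 = s"
      proof (rule ccontr)
        assume nt: "\<not> ?thesis"
        have all: "\<forall>s\<in>S. \<forall>t\<in>T. \<forall>t'\<in>T. t' + (s - t) \<in> S"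
        proof (intro ballI)
          fix s t t' assume h: "s \<in> S" "t \<in> T" "t' \<in> T"
          obtain s1 where s1: "s1 \<in> S" "s1 - (s - t) \<in> T" "s1 \<noteq> s" using nt h by blast
          have "s - (s - t) \<in> T" using h by simp
          then have "\<forall>t'\<in>T. t' + (s - t) \<in> S" using ov[rule_format, of s s1 "s - t"] s1 h by metis
          then show "t' + (s - t) \<in> S" using h by blast
        qed
        obtain t1 t2 where t12: "t1 \<in> T" "t2 \<in> T" "t1 \<noteq> t2"
          using less.prems(2) by (metis card_le_Suc0_iff_eq finite not_less_eq_eq numeral_2_eq_2)
        have "\<forall>s\<in>S. s + (t1 - t2) \<in> S"
        proof
          fix s assume "s \<in> S"
          then have "t1 + (s - t2) \<in> S" using all t12 by blast
          then show "s + (t1 - t2) \<in> S" by (simp add: algebra_simps)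
        qed
        then have "pG TYPE('a) \<le> card S" using stab_pG[of S "t1 - t2"] Sne t12 by simp
        then show False using cSle less.prems by simp
      qed
      then obtain s t where st: "s \<in> S" "t \<in> T" and good: "\<forall>s1\<in>S. s1 - (s - t) \<in> T \<longrightarrow> s1 = s"
        by blast
      define X where "X = (\<lambda>z. z - s) ` S"
      define Y where "Y = (\<lambda>z. z - t) ` T"
      have mX: "x \<in> X \<longleftrightarrow> x + s \<in> S" for x unfolding X_def by (rule mem_tr)
      have mY: "y \<in> Y \<longleftrightarrow> y + t \<in> T" for y unfolding Y_def by (rule mem_tr)
      have cX: "card X = card S" unfolding X_def by (simp add: card_image inj_on_def)
      have cY: "card Y = card T" unfolding Y_def by (simp add: card_image inj_on_def)
      have XY: "X \<inter> Y = {0}"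
      proof
        show "X \<inter> Y \<subseteq> {0}"
        proof
          fix z assume "z \<in> X \<inter> Y"
          then have "z + s \<in> S" "z + t \<in> T" using mX mY by auto
          moreover have "(z + s) - (s - t) = z + t" by (simp add: algebra_simps)
          ultimately have "z + s = s" using good by metis
          then show "z \<in> {0}" by simp
        qed
        show "{0} \<subseteq> X \<inter> Y" using mX mY st by simp
      qed
      have dec: "sumset S T = (\<lambda>x. x + t) ` S \<union> (\<lambda>x. x + s) ` T"
      proof -
        have subs: "(\<lambda>x. x + t) ` S \<union> (\<lambda>x. x + s) ` T \<subseteq> sumset S T"
          unfolding sumset_def using st by (auto simp: add.commute) (metis add.commute)
        have int: "(\<lambda>x. x + t) ` S \<inter> (\<lambda>x. x + s) ` T = {s + t}"
        proof
          show "(\<lambda>x. x + t) ` S \<inter> (\<lambda>x. x + s) ` T \<subseteq> {s + t}"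
          proof
            fix z assume "z \<in> (\<lambda>x. x + t) ` S \<inter> (\<lambda>x. x + s) ` T"
            then obtain s1 t1 where "s1 \<in> S" "t1 \<in> T" "z = s1 + t" "z = t1 + s" by auto
            moreover have "s1 - (s - t) = t1" using calculation by (simp add: algebra_simps)
            ultimately have "s1 = s" using good by metis
            then show "z \<in> {s + t}" using \<open>z = s1 + t\<close> by simp
          qed
          show "{s + t} \<subseteq> (\<lambda>x. x + t) ` S \<inter> (\<lambda>x. x + s) ` T" using st by (auto simp: add.commute)
        qed
        have "card ((\<lambda>x. x + t) ` S \<union> (\<lambda>x. x + s) ` T) + card {s + t} = card S + card T"
          using card_Un_Int[of "(\<lambda>x. x + t) ` S" "(\<lambda>x. x + s) ` T"] int
          by (simp add: card_image inj_on_def)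
        then have "card ((\<lambda>x. x + t) ` S \<union> (\<lambda>x. x + s) ` T) = card (sumset S T)" using sig by simp
        then show ?thesis using subs by (metis card_subset_eq finite)
      qed
      have False
      proof (rule Zn)
        show "0 \<in> X" "0 \<in> Y" using mX mY st by auto
        show "X \<inter> Y = {0}" by (rule XY)
        show "3 \<le> card Y" "2 \<le> card X" using cX cY c3 less.prems by auto
        show "card X < pG TYPE('a)" "card Y < pG TYPE('a)"
          using cX cY sig less.prems by auto
        show "2 < pG TYPE('a)" by (rule p2)
        show "\<forall>x\<in>X. \<forall>y\<in>Y. x + y \<in> X \<union> Y"
        proof (intro ballI)
          fix x y assume "x \<in> X" "y \<in> Y"
          then have "(x + s) + (y + t) \<in> sumset S T" using mX mY unfolding sumset_def by blast
          then have "(x + s) + (y + t) \<in> (\<lambda>x. x + t) ` S \<union> (\<lambda>x. x + s) ` T" using dec by simp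
          then obtain w where "w \<in> S \<and> (x + s) + (y + t) = w + t \<or> w \<in> T \<and> (x + s) + (y + t) = w + s"
            by blast
          then have "(x + y) + s \<in> S \<or> (x + y) + t \<in> T"
          proof (elim disjE conjE)
            assume "w \<in> S" "(x + s) + (y + t) = w + t"
            then have "((x + y) + s) + t = w + t" by (simp add: algebra_simps)
            then show ?thesis using \<open>w \<in> S\<close> by simp
          next
            assume "w \<in> T" "(x + s) + (y + t) = w + s"
            then have "((x + y) + t) + s = w + s" by (simp add: algebra_simps)
            then show ?thesis using \<open>w \<in> T\<close> by simp
          qed
          then show "x + y \<in> X \<union> Y" using mX mY by auto
        qed
        show "\<forall>f u v. u \<noteq> v \<longrightarrow> u \<in> X \<longrightarrow> v \<in> X \<longrightarrow> u - f \<in> Y \<longrightarrow> v - f \<in> Y \<longrightarrow> (\<forall>y\<in>Y. y + f \<in> X)"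
        proof (intro allI impI ballI)
          fix f u v y assume h: "u \<noteq> v" "u \<in> X" "v \<in> X" "u - f \<in> Y" "v - f \<in> Y" "y \<in> Y"
          define e where "e = f + s - t"
          have eq1: "(u + s) - e = (u - f) + t" and eq2: "(v + s) - e = (v - f) + t"
            unfolding e_def by (simp_all add: algebra_simps)
          have m1: "(u - f) + t \<in> T" and m2: "(v - f) + t \<in> T" using h(4,5) mY by auto
          have "(u + s) - e \<in> T" "(v + s) - e \<in> T" unfolding eq1 eq2 by (rule m1, rule m2)
          moreover have "u + s \<noteq> v + s" using h by simp
          ultimately have "\<forall>t'\<in>T. t' + e \<in> S" using ov h mX by blast
          then have "(y + t) + e \<in> S" using h mY by blast
          moreover have "(y + t) + e = (y + f) + s" unfolding e_def by (simp add: algebra_simps)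
          ultimately show "y + f \<in> X" using mX by simp
        qed
      qed
      then show ?thesis by simp
    qed
  qed
qed

definition nbr :: "('a \<Rightarrow> 'b \<Rightarrow> bool) \<Rightarrow> 'b set \<Rightarrow> 'a set \<Rightarrow> 'b set" where
  "nbr E R S = {r\<in>R. \<exists>l\<in>S. E l r}"

lemma hall:
  assumes "finite L" "finite R" "\<forall>S\<subseteq>L. card S \<le> card (nbr E R S)"
  shows "\<exists>f. inj_on f L \<and> f ` L \<subseteq> R \<and> (\<forall>l\<in>L. E l (f l))"
  using assms
proof (induction "card L" arbitrary: L R rule: less_induct)
  case less
  show ?case
  proof (cases "L = {}")
    case True then show ?thesis by simp
  next
    case Lne: False
    show ?thesis
    proof (cases "\<exists>S0. S0 \<subseteq> L \<and> S0 \<noteq> {} \<and> S0 \<noteq> L \<and> card (nbr E R S0) \<le> card S0")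
      case True
      then obtain S0 where S0: "S0 \<subseteq> L" "S0 \<noteq> {}" "S0 \<noteq> L" "card (nbr E R S0) \<le> card S0" by blast
      have fS0: "finite S0" using S0 less.prems finite_subset by blast
      have lt1: "card S0 < card L" using S0 less.prems by (meson psubsetI psubset_card_mono)
      have lt2: "card (L - S0) < card L"
      proof -
        have "card (L - S0) = card L - card S0" using S0(1) fS0 by (simp add: card_Diff_subset)
        moreover have "0 < card S0" using fS0 S0(2) by (simp add: card_gt_0_iff)
        moreover have "card S0 \<le> card L" using S0(1) less.prems(1) by (simp add: card_mono)
        ultimately show ?thesis by linarith
      qed
      have h1: "\<forall>S\<subseteq>S0. card S \<le> card (nbr E (nbr E R S0) S)"
      proof (intro allI impI)
        fix S assume "S \<subseteq> S0"
        then have "nbr E (nbr E R S0) S = nbr E R S" unfolding nbr_def by auto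
        then show "card S \<le> card (nbr E (nbr E R S0) S)" using less.prems(3) \<open>S \<subseteq> S0\<close> S0 by auto
      qed
      obtain f1 where f1: "inj_on f1 S0" "f1 ` S0 \<subseteq> nbr E R S0" "\<forall>l\<in>S0. E l (f1 l)"
        using less.hyps[OF lt1 fS0 _ h1] less.prems(2) unfolding nbr_def by auto
      have h2: "\<forall>S\<subseteq>L - S0. card S \<le> card (nbr E (R - nbr E R S0) S)"
      proof (intro allI impI)
        fix S assume S: "S \<subseteq> L - S0"
        have fS: "finite S" using S less.prems finite_subset by blast
        have "S \<inter> S0 = {}" using S by blast
        then have "card S + card S0 = card (S \<union> S0)" using card_Un_disjoint[of S S0] fS fS0 by simp
        also have "\<dots> \<le> card (nbr E R (S \<union> S0))" 
          using less.prems(3) S S0(1) by (metis Diff_subset Un_subset_iff subset_trans)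
        also have "nbr E R (S \<union> S0) = nbr E (R - nbr E R S0) S \<union> nbr E R S0" unfolding nbr_def by auto
        also have "card \<dots> \<le> card (nbr E (R - nbr E R S0) S) + card (nbr E R S0)" by (rule card_Un_le)
        finally show "card S \<le> card (nbr E (R - nbr E R S0) S)" using S0(4) by linarith
      qed
      obtain f2 where f2: "inj_on f2 (L - S0)" "f2 ` (L - S0) \<subseteq> R - nbr E R S0" "\<forall>l\<in>L - S0. E l (f2 l)"
        using less.hyps[OF lt2 _ _ h2] less.prems by auto
      define f where "f l = (if l \<in> S0 then f1 l else f2 l)" for l
      have "inj_on f L"
      proof (rule inj_onI)
        fix x y assume xy: "x \<in> L" "y \<in> L" "f x = f y"
        show "x = y"
        proof (cases "x \<in> S0"; cases "y \<in> S0")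
          assume "x \<in> S0" "y \<in> S0" then show ?thesis using xy f1(1) unfolding f_def inj_on_def by auto
        next
          assume a: "x \<in> S0" "y \<notin> S0"
          then have "f x \<in> nbr E R S0" "f y \<notin> nbr E R S0" using f1(2) f2(2) xy unfolding f_def by auto
          then show ?thesis using xy by simp
        next
          assume a: "x \<notin> S0" "y \<in> S0"
          then have "f y \<in> nbr E R S0" "f x \<notin> nbr E R S0" using f1(2) f2(2) xy unfolding f_def by auto
          then show ?thesis using xy by simp
        next
          assume "x \<notin> S0" "y \<notin> S0" then show ?thesis using xy f2(1) unfolding f_def inj_on_def by auto
        qed
      qed
      moreover have "f ` L \<subseteq> R" using f1 f2 S0 unfolding f_def nbr_def by auto
      moreover have "\<forall>l\<in>L. E l (f l)" using f1 f2 unfolding f_def by auto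
      ultimately show ?thesis by blast
    next
      case False
      then have big: "card S0 < card (nbr E R S0)" if "S0 \<subseteq> L" "S0 \<noteq> {}" "S0 \<noteq> L" for S0
      proof -
        have "\<not> card (nbr E R S0) \<le> card S0" using False that by blast
        then show ?thesis by simp
      qed
      obtain l where l: "l \<in> L" using Lne by blast
      have "{l} \<subseteq> L" using l by simp
      then have "card {l} \<le> card (nbr E R {l})" by (rule less.prems(3)[rule_format])
      then have "1 \<le> card (nbr E R {l})" by simp
      then have "nbr E R {l} \<noteq> {}" by auto
      then obtain r where "r \<in> nbr E R {l}" by blast
      then have r: "r \<in> R" "E l r" unfolding nbr_def by auto
      have lt: "card (L - {l}) < card L" using l less.prems(1) by (metis card_Diff1_less)
      have h: "\<forall>S\<subseteq>L - {l}. card S \<le> card (nbr E (R - {r}) S)"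
      proof (intro allI impI)
        fix S assume S: "S \<subseteq> L - {l}"
        show "card S \<le> card (nbr E (R - {r}) S)"
        proof (cases "S = {}")
          case True then show ?thesis by simp
        next
          case False
          have "card S < card (nbr E R S)" using big[of S] S False l by auto
          moreover have "nbr E (R - {r}) S = nbr E R S - {r}" unfolding nbr_def by auto
          moreover have "card (nbr E R S) \<le> card (nbr E R S - {r}) + 1"
            by (simp add: card_Diff_singleton_if, arith)
          ultimately show ?thesis by simp
        qed
      qed
      obtain g where g: "inj_on g (L - {l})" "g ` (L - {l}) \<subseteq> R - {r}" "\<forall>x\<in>L - {l}. E x (g x)"
        using less.hyps[OF lt _ _ h] less.prems by auto
      define f where "f = g(l := r)"
      have "inj_on f L"
      proof (rule inj_onI)
        fix x y assume xy: "x \<in> L" "y \<in> L" "f x = f y"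
        show "x = y"
        proof (cases "x = l"; cases "y = l")
          assume "x \<noteq> l" "y \<noteq> l" then show ?thesis using xy g(1) unfolding f_def inj_on_def by auto
        next
          assume "x = l" "y \<noteq> l" then have "g y \<in> R - {r}" using g(2) xy by auto
          then show ?thesis using xy \<open>x = l\<close> \<open>y \<noteq> l\<close> unfolding f_def by auto
        next
          assume "x \<noteq> l" "y = l" then have "g x \<in> R - {r}" using g(2) xy by auto
          then show ?thesis using xy \<open>x \<noteq> l\<close> \<open>y = l\<close> unfolding f_def by auto
        qed auto
      qed
      moreover have "f ` L \<subseteq> R" using g r unfolding f_def by auto
      moreover have "\<forall>x\<in>L. E x (f x)" using g r unfolding f_def by auto
      ultimately show ?thesis by blast
    qed
  qed
qed

lemma indep_finite: assumes m: "matroid M" shows "finite (indep M)"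
proof -
  have sub: "indep M \<subseteq> Pow (ground M)" using m unfolding matroid_def by (elim conjE)
  have fg: "finite (ground M)" using m unfolding matroid_def by (elim conjE)
  have fp: "finite (Pow (ground M))" using fg by simp
  show ?thesis by (rule finite_subset[OF sub fp])
qed
lemma rank_attained: assumes m: "matroid M" shows "\<exists>X\<in>indep M. card X = mrank M"
proof -
  have e: "{} \<in> indep M" using m unfolding matroid_def by (elim conjE)
  then have ne: "card ` indep M \<noteq> {}" by blast
  have fi: "finite (card ` indep M)" using indep_finite[OF m] by (rule finite_imageI)
  have "mrank M \<in> card ` indep M" unfolding mrank_def by (rule Max_in[OF fi ne])
  then obtain X where "X \<in> indep M" "mrank M = card X" by (rule imageE)
  then show ?thesis by auto
qed

lemma indep_sub: assumes "matroid M" "X \<in> indep M" shows "X \<subseteq> ground M"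
proof -
  have "indep M \<subseteq> Pow (ground M)" using assms(1) unfolding matroid_def by (elim conjE)
  then show ?thesis using assms(2) by blast
qed

lemma card_le_rank: assumes "matroid M" "X \<in> indep M" shows "card X \<le> mrank M"
proof -
  have fi: "finite (card ` indep M)" using indep_finite[OF assms(1)] by (rule finite_imageI)
  have "card X \<in> card ` indep M" using assms(2) by (rule imageI)
  then show ?thesis unfolding mrank_def by (rule Max_ge[OF fi])
qed

lemma basis_card: assumes m: "matroid M" and b: "basis M B" shows "card B = mrank M"
proof (rule ccontr)
  assume ne: "card B \<noteq> mrank M"
  have Bi: "B \<in> indep M" using b unfolding basis_def by (elim conjE)
  have "card B \<le> mrank M" by (rule card_le_rank[OF m Bi])
  then have lt: "card B < mrank M" using ne by linarith
  obtain X where X: "X \<in> indep M" "card X = mrank M" using rank_attained[OF m] by blast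
  have aug: "\<forall>X Y. X \<in> indep M \<and> Y \<in> indep M \<and> card X < card Y
          \<longrightarrow> (\<exists>y \<in> Y - X. insert y X \<in> indep M)" using m unfolding matroid_def by (elim conjE)
  have "B \<in> indep M \<and> X \<in> indep M \<and> card B < card X" using Bi X lt by simp
  then have "\<exists>y \<in> X - B. insert y B \<in> indep M" using aug by blast
  then obtain y where y: "y \<in> X - B" "insert y B \<in> indep M" by blast
  have "\<forall>Z \<in> indep M. B \<subseteq> Z \<longrightarrow> Z = B" using b unfolding basis_def by (elim conjE)
  then have "insert y B = B" using y(2) by blast
  then show False using y by blast
qed

lemma basis_exists: assumes m: "matroid M" shows "\<exists>B. basis M B \<and> card B = mrank M"
proof -
  obtain X where X: "X \<in> indep M" "card X = mrank M" using rank_attained[OF m] by blast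
  have fg: "finite (ground M)" using m unfolding matroid_def by (elim conjE)
  have fin: "finite Y" if "Y \<in> indep M" for Y
    by (rule finite_subset[OF indep_sub[OF m that] fg])
  have "basis M X" unfolding basis_def
  proof (intro conjI ballI impI)
    show "X \<in> indep M" by (rule X(1))
    fix Y assume Y: "Y \<in> indep M" "X \<subseteq> Y"
    have "card Y \<le> card X" using card_le_rank[OF m Y(1)] X by simp
    moreover have "card X \<le> card Y" by (rule card_mono[OF fin[OF Y(1)] Y(2)])
    ultimately have "card X = card Y" by simp
    then show "Y = X" using card_subset_eq[OF fin[OF Y(1)] Y(2)] by simp
  qed
  then show ?thesis using X by blast
qed

theorem theorem2p12:
  fixes M N :: "'a::{ab_group_add, finite} matroid" and n :: nat
  assumes "matroid M" and "matroid N"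
    and "loopless M" and "loopless N"
    and "mrank M = n" and "mrank N = n"
    and "card (ground M) = n + 1" and "card (ground N) = n + 1"
    and "n + 1 < pG TYPE('a)"
    and "\<forall>a \<in> ground M. card ((\<lambda>x. - a + x) ` ground M \<inter> ground N) \<noteq> n"
    and "\<not> progression (ground M)" and "\<not> semi_progression (ground M)"
    and "0 \<notin> ground N"
  shows "matched M N"
  unfolding matched_def
proof (intro allI impI)
  note mM = assms(1) and mN = assms(2)
  define A where "A = ground M"
  define B where "B = ground N"
  fix BM assume bM: "basis M BM"
  have cBM: "card BM = n" using basis_card[OF mM bM] assms(5) by simp
  have BMA: "BM \<subseteq> A" using indep_sub[OF mM] bM unfolding basis_def A_def by blast
  obtain BN where bN: "basis N BN" and cBN: "card BN = n" using basis_exists[OF mN] assms(6) by auto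
  have BNB: "BN \<subseteq> B" using indep_sub[OF mN] bN unfolding basis_def B_def by blast
  define E where "E a c = (a + c \<notin> A)" for a c
  have hallc: "\<forall>S\<subseteq>BM. card S \<le> card (nbr E BN S)"
  proof (intro allI impI, rule ccontr)
    fix S assume S: "S \<subseteq> BM" and lt0: "\<not> card S \<le> card (nbr E BN S)"
    then have lt: "card (nbr E BN S) < card S" by simp
    define T where "T = BN - nbr E BN S"
    have ST: "\<forall>a\<in>S. \<forall>c\<in>T. a + c \<in> A" unfolding T_def nbr_def E_def by auto
    have "card T = card BN - card (nbr E BN S)"
      unfolding T_def by (rule card_Diff_subset) (auto simp: nbr_def)
    then have cT: "card T = n - card (nbr E BN S)" using cBN by simp
    have cSn: "card S \<le> n" using card_mono[OF _ S] cBM by simp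
    have sum: "n + 1 \<le> card S + card T" using cT lt cSn by linarith
    have TB: "T \<subseteq> B" using BNB unfolding T_def by auto
    show False
    proof (cases "card S = 1")
      case True
      then obtain s where s: "S = {s}" using card_1_singletonE by blast
      have sA: "s \<in> A" using s S BMA by auto
      define C where "C = (\<lambda>x. - s + x) ` A"
      have "T \<subseteq> C \<inter> B"
      proof
        fix c assume c: "c \<in> T"
        then have "s + c \<in> A" using ST s by auto
        moreover have "c = - s + (s + c)" by (simp add: algebra_simps)
        ultimately have "c \<in> C" unfolding C_def by blast
        then show "c \<in> C \<inter> B" using c TB by blast
      qed
      then have "card T \<le> card (C \<inter> B)" by (rule card_mono[OF finite])
      moreover have "card (C \<inter> B) \<noteq> n" using assms(10) sA unfolding C_def A_def B_def by blast
      moreover have "card (C \<inter> B) \<le> card B" by (rule card_mono) auto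
      ultimately have "card (C \<inter> B) = card B" using True cT lt assms(8) unfolding B_def by linarith
      then have "C \<inter> B = B" by (rule card_subset_eq[OF finite, rotated]) auto
      then have BC: "B \<subseteq> C" by blast
      have "card C = card B" unfolding C_def using assms(7,8) unfolding A_def B_def by (simp add: card_image inj_on_def)
      then have "B = C" using card_subset_eq[OF finite BC] by simp
      moreover have "0 \<in> C" unfolding C_def using sA by force
      ultimately show False using assms(13) unfolding B_def by simp
    next
      case False
      have "S \<noteq> {}" using lt by auto
      then have "0 < card S" by (simp add: card_gt_0_iff)
      then have cS2: "2 \<le> card S" using False by linarith
      define T' where "T' = insert 0 T"
      have "0 \<notin> T" using TB assms(13) unfolding B_def by auto
      then have cT': "card T' = card T + 1" unfolding T'_def by simp
      have cT1: "1 \<le> card T" using sum cSn by linarith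
      have sub: "sumset S T' \<subseteq> A"
        unfolding sumset_def T'_def using ST S BMA by auto
      have cA: "card A = n + 1" using assms(7) unfolding A_def .
      have le: "card (sumset S T') \<le> n + 1" using card_mono[OF finite sub] cA by simp
      have prog: "progression (sumset S T')"
      proof (rule W)
        show "2 \<le> card S" by (rule cS2)
        show "2 \<le> card T'" using cT' cT1 by simp
        show "card (sumset S T') + 1 \<le> card S + card T'" using le cT' sum by linarith
        show "card (sumset S T') < pG TYPE('a)" using le assms(9) by linarith
      qed
      have "T' \<noteq> {}" unfolding T'_def by simp
      then have "min (pG TYPE('a)) (card S + card T' - 1) \<le> card (sumset S T')"
        using CD \<open>S \<noteq> {}\<close> by blast
      then have "n + 1 \<le> card (sumset S T')" using assms(9) cT' sum by linarith
      then have "sumset S T' = A" using card_subset_eq[OF finite sub] le cA by simp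
      then show False using prog assms(11) unfolding A_def by simp
    qed
  qed
  obtain f where f: "inj_on f BM" "f ` BM \<subseteq> BN" "\<forall>l\<in>BM. E l (f l)"
    using hall[OF finite finite hallc] by blast
  have "card (f ` BM) = card BN" using f(1) cBM cBN by (simp add: card_image)
  then have "f ` BM = BN" using card_subset_eq[OF finite f(2)] by simp
  then have "bij_betw f BM BN" using f(1) unfolding bij_betw_def by simp
  moreover have "\<forall>a\<in>BM. a + f a \<notin> ground M" using f(3) unfolding E_def A_def by simp
  ultimately show "\<exists>BN. basis N BN \<and> bases_matched M BM BN"
    using bN unfolding bases_matched_def by blast
qed

end
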